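(* Let $A\subset B$ be a finite set which is both $v$-connected and $w$-connected for two vertices $v,w$ of $T$. Then $\mu^{A,v}=\mu^{A,w}$.
   Context: Setting: $B=\mathbb{QP}^1$, the vertex set of the Farey tessellation of $\mathbb H^2$, with dual trivalent tree $T$; tribones (counterclockwise-ordered vertex triples of the triangles, up to cyclic permutation) and quadribones ($(a,b,c,d)$ with $(a,b,c),(d,c,b)$ the oriented tribones of the endpoints of an edge, up to $(a,b,c,d)\mapsto(d,c,b,a)$). $A$ is $v$-connected if it is a union of quadribones whose edges form a connected subset of $T$ containing $v$. Given a (3,4)-measured configuration data $(W,\Gamma,O_3,O_4,\mu^3,\mu^4)$ (with $\mu^3$ invariant under cyclic permutations, $\mu^4$ invariant under $(a,b,c,d)\mapsto(d,c,b,a)$, $p_*\mu^4=\mu^3$ for $p(a,b,c,d)=(a,b,c)$) and the disintegration kernel $\nu_{(a,b,c)}$ of $\mu^4$ over $\mu^3$, for a finite $u$-connected set $A$ the measure $\mu^{A,u}$ on $\mathcal W(A)=W^A$ is defined by: start with $\mu^3$ transported to $W^{t_u}$ via the tribone $t_u$ of $u$, then successively add points $a\notin C$ such that $t\cup\{a\}$ is a quadribone $(x,y,z,a)$ for some tribone $t=(x,y,z)\subset C$, setting $\mu^{C\cup\{a\}}=\int\delta_f\otimes\nu_{(f(x),f(y),f(z))}\,d\mu^{C}(f)$, until $A$ is reached (the result does not depend on the order of the additions). *)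

theory Defs
  imports "HOL-Probability.Probability"
begin

text \<open>QP^1 = Q together with a point at infinity (None).  A point is given by its
  reduced integer coordinates (p,q); infinity is (1,0).\<close>

type_synonym qp1 = "rat option"

definition fcoord :: "qp1 \<Rightarrow> int \<times> int" where
  "fcoord a = (case a of None \<Rightarrow> (1, 0) | Some x \<Rightarrow> quotient_of x)"

definition farey_adj :: "qp1 \<Rightarrow> qp1 \<Rightarrow> bool" where
  "farey_adj a b \<longleftrightarrow> (case fcoord a of (p, q) \<Rightarrow> case fcoord b of (r, s) \<Rightarrow> \<bar>p * s - q * r\<bar> = 1)"

text \<open>Order on the boundary line R \<union> {\<infinity>}, with \<infinity> on top; the counterclockwise cyclic
  order on the boundary circle of the upper half plane is the cyclic order induced by it.\<close>
definition qlt :: "qp1 \<Rightarrow> qp1 \<Rightarrow> bool" where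
  "qlt a b \<longleftrightarrow> (case (a, b) of (Some x, Some y) \<Rightarrow> x < y | (Some _, None) \<Rightarrow> True | _ \<Rightarrow> False)"

definition ccw :: "qp1 \<Rightarrow> qp1 \<Rightarrow> qp1 \<Rightarrow> bool" where
  "ccw a b c \<longleftrightarrow> (qlt a b \<and> qlt b c) \<or> (qlt b c \<and> qlt c a) \<or> (qlt c a \<and> qlt a b)"

text \<open>Oriented tribone (a representative of the cyclic class): vertices of a Farey
  triangle in counterclockwise order.\<close>
definition tribone :: "qp1 \<Rightarrow> qp1 \<Rightarrow> qp1 \<Rightarrow> bool" where
  "tribone x y z \<longleftrightarrow> farey_adj x y \<and> farey_adj y z \<and> farey_adj z x \<and> ccw x y z"

definition quadribone :: "qp1 \<Rightarrow> qp1 \<Rightarrow> qp1 \<Rightarrow> qp1 \<Rightarrow> bool" where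
  "quadribone a b c d \<longleftrightarrow> tribone a b c \<and> tribone d c b"

text \<open>Vertices of the dual tree T: the Farey triangles (as vertex sets).\<close>
definition farey_triangles :: "qp1 set set" where
  "farey_triangles = {{x, y, z} | x y z. tribone x y z}"

definition tree_edges :: "qp1 set set set" where
  "tree_edges = {{s, t} | s t. s \<in> farey_triangles \<and> t \<in> farey_triangles \<and> card (s \<inter> t) = 2}"

text \<open>A is v-connected: A is the union of the quadribones (= unions of the two endpoint
  triangles) of a set E of edges of T which forms a connected subset of T containing v.\<close>
definition vconnected :: "qp1 set \<Rightarrow> qp1 set \<Rightarrow> bool" where
  "vconnected A v \<longleftrightarrow> (\<exists>E. E \<subseteq> tree_edges \<and> A = \<Union>(\<Union>E) \<and> v \<in> \<Union>E \<and>
      (\<forall>s\<in>\<Union>E. \<forall>t\<in>\<Union>E. (s, t) \<in> {(s', t'). {s', t'} \<in> E}\<^sup>*))"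

definition tri_init :: "'w measure \<Rightarrow> ('w \<times> 'w \<times> 'w) measure \<Rightarrow> qp1 \<Rightarrow> qp1 \<Rightarrow> qp1
    \<Rightarrow> (qp1 \<Rightarrow> 'w) measure" where
  "tri_init W mu3 x y z = distr mu3 (PiM {x, y, z} (\<lambda>_. W))
     (\<lambda>(p, q, r). (\<lambda>i\<in>{x, y, z}. if i = x then p else if i = y then q else r))"

text \<open>mu^{C \<union> {a}} = \<integral> \<delta>_f \<otimes> \<nu>_(f x, f y, f z) d mu^C (f).\<close>
definition kext :: "'w measure \<Rightarrow> ('w \<times> 'w \<times> 'w \<Rightarrow> 'w measure) \<Rightarrow> qp1 set
    \<Rightarrow> (qp1 \<Rightarrow> 'w) measure \<Rightarrow> qp1 \<Rightarrow> qp1 \<Rightarrow> qp1 \<Rightarrow> qp1 \<Rightarrow> (qp1 \<Rightarrow> 'w) measure" where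
  "kext W nu C m x y z a = measure_of (space (PiM (insert a C) (\<lambda>_. W)))
     (sets (PiM (insert a C) (\<lambda>_. W)))
     (\<lambda>S. \<integral>\<^sup>+ f. emeasure (nu (f x, f y, f z)) ((\<lambda>w. f(a := w)) -` S \<inter> space W) \<partial>m)"

text \<open>mu_build W mu3 nu u C m: m is a measure on W^C obtained by the successive-addition
  construction starting from the tribone of the vertex u of T.\<close>
inductive mu_build :: "'w measure \<Rightarrow> ('w \<times> 'w \<times> 'w) measure \<Rightarrow> ('w \<times> 'w \<times> 'w \<Rightarrow> 'w measure)
    \<Rightarrow> qp1 set \<Rightarrow> qp1 set \<Rightarrow> (qp1 \<Rightarrow> 'w) measure \<Rightarrow> bool"
  for W mu3 nu u where
  base: "tribone x y z \<Longrightarrow> u = {x, y, z} \<Longrightarrow> mu_build W mu3 nu u {x, y, z} (tri_init W mu3 x y z)"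
| step: "mu_build W mu3 nu u C m \<Longrightarrow> x \<in> C \<Longrightarrow> y \<in> C \<Longrightarrow> z \<in> C \<Longrightarrow> a \<notin> C \<Longrightarrow>
     quadribone x y z a \<Longrightarrow> mu_build W mu3 nu u (insert a C) (kext W nu C m x y z a)"

end

theory Submission
  imports Defs
begin


definition phi :: "qp1 \<Rightarrow> real" where
  "phi a = (case a of None \<Rightarrow> pi/2 | Some x \<Rightarrow> arctan (real_of_rat x))"

lemma qlt_phi: "qlt a b \<longleftrightarrow> phi a < phi b"
proof (cases a; cases b)
  fix x y assume "a = Some x" "b = Some y" thus ?thesis
    by (simp add: qlt_def phi_def arctan_less_iff of_rat_less)
next
  fix x assume "a = Some x" "b = None" thus ?thesis
    using arctan_ubound[of "real_of_rat x"] by (simp add: qlt_def phi_def)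
next
  fix x assume "a = None" "b = Some x" thus ?thesis
    using arctan_ubound[of "real_of_rat x"] by (simp add: qlt_def phi_def)
qed (simp add: qlt_def phi_def)

lemma phi_eq: "phi a = phi b \<longleftrightarrow> a = b"
proof (cases a; cases b)
  fix x y assume "a = Some x" "b = Some y" thus ?thesis
    by (simp add: phi_def arctan_eq_iff)
next
  fix x assume "a = Some x" "b = None" thus ?thesis
    using arctan_ubound[of "real_of_rat x"] by (simp add: phi_def)
next
  fix x assume "a = None" "b = Some x" thus ?thesis
    using arctan_ubound[of "real_of_rat x"] by (simp add: phi_def)
qed (simp add: phi_def)

lemma ccw_phi: "ccw a b c \<longleftrightarrow> (phi a < phi b \<and> phi b < phi c) \<or> (phi b < phi c \<and> phi c < phi a) \<or> (phi c < phi a \<and> phi a < phi b)"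
  by (simp add: ccw_def qlt_phi)

definition det2 :: "int \<times> int \<Rightarrow> int \<times> int \<Rightarrow> int" where
  "det2 u v = fst u * snd v - snd u * fst v"

lemma adj_det: "farey_adj a b \<longleftrightarrow> \<bar>det2 (fcoord a) (fcoord b)\<bar> = 1"
  by (simp add: farey_adj_def det2_def split: prod.splits)


lemma qlt_det: "qlt a b \<longleftrightarrow> det2 (fcoord a) (fcoord b) < 0"
proof (cases a; cases b)
  fix x y assume ab: "a = Some x" "b = Some y"
  obtain p q where pq: "quotient_of x = (p, q)" by fastforce
  obtain r s where rs: "quotient_of y = (r, s)" by fastforce
  have q: "q > 0" "s > 0" using pq rs quotient_of_denom_pos by blast+
  have x: "x = of_int p / of_int q" "y = of_int r / of_int s" using pq rs quotient_of_div by blast+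
  have "x < y \<longleftrightarrow> of_int p * of_int s < (of_int r * of_int q :: rat)"
    using q by (simp add: x divide_less_eq less_divide_eq mult.commute mult.left_commute)
  also have "\<dots> \<longleftrightarrow> p * s < r * q" by (metis of_int_less_iff of_int_mult)
  finally show ?thesis using ab pq rs by (simp add: qlt_def det2_def fcoord_def mult.commute)
next
  fix x assume ab: "a = Some x" "b = None"
  obtain p q where pq: "quotient_of x = (p, q)" by fastforce
  have q: "q > 0" using pq quotient_of_denom_pos by blast
  thus ?thesis using ab pq by (simp add: qlt_def det2_def fcoord_def)
next
  fix x assume ab: "a = None" "b = Some x"
  obtain p q where pq: "quotient_of x = (p, q)" by fastforce
  have q: "q > 0" using pq quotient_of_denom_pos by blast
  thus ?thesis using ab pq by (simp add: qlt_def det2_def fcoord_def)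
qed (simp add: qlt_def det2_def fcoord_def)

lemma plucker: "det2 A B * det2 C E = det2 C B * det2 A E + det2 A C * det2 B E"
  by (simp add: det2_def algebra_simps)

lemma det2_anti: "det2 A B = - det2 B A"
  by (simp add: det2_def)

lemma adj_sym: "farey_adj a b \<longleftrightarrow> farey_adj b a"
  by (simp add: adj_det det2_anti[of "fcoord a"])

lemma F2lin:
  assumes "farey_adj a b" "farey_adj c d" "qlt a c" "qlt c b" "qlt d a \<or> qlt b d"
  shows False
proof -
  define A where "A = fcoord a"
  define B where "B = fcoord b"
  define C where "C = fcoord c"
  define E where "E = fcoord d"
  have ab: "qlt a b" using assms by (simp add: qlt_phi)
  have AB: "det2 A B = -1" using ab assms(1) by (simp add: A_def B_def qlt_det adj_det)
  have CE: "\<bar>det2 C E\<bar> = 1" using assms(2) by (simp add: C_def E_def adj_det)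
  have X1: "det2 C B < 0" "det2 A C < 0" using assms(3,4) by (simp_all add: A_def B_def C_def qlt_det)
  have pl: "- det2 C E = det2 C B * det2 A E + det2 A C * det2 B E" using plucker[of A B C E] AB by simp
  show False
  proof (cases "qlt b d")
    case True
    hence "qlt a d" using ab by (simp add: qlt_phi)
    hence "det2 A E < 0" "det2 B E < 0" using True by (simp_all add: A_def B_def E_def qlt_det)
    hence "det2 C B * det2 A E > 0" "det2 A C * det2 B E > 0" using X1 by (simp_all add: mult_neg_neg)
    thus False using pl CE by linarith
  next
    case False
    hence da: "qlt d a" using assms(5) by simp
    hence "qlt d b" using ab by (simp add: qlt_phi)
    hence "det2 A E > 0" "det2 B E > 0" using da
      by (simp_all add: A_def B_def E_def qlt_det det2_anti[of "fcoord a"] det2_anti[of "fcoord b"])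
    hence "det2 C B * det2 A E < 0" "det2 A C * det2 B E < 0" using X1 by (simp_all add: mult_neg_pos)
    thus False using pl CE by linarith
  qed
qed

lemma F2:
  assumes "farey_adj a b" "farey_adj c d" "ccw a c b" "ccw b d a"
  shows False
proof -
  have s1: "farey_adj b a" "farey_adj d c" using assms adj_sym by blast+
  from assms(3,4) show False unfolding ccw_def
    using F2lin[OF assms(1,2)] F2lin[OF s1] by (auto simp: qlt_phi)
qed

lemma tri_D: "tribone x y z \<Longrightarrow> farey_adj x y \<and> farey_adj y z \<and> farey_adj z x \<and> ccw x y z"
  by (simp add: tribone_def)

lemma ccw_distinct: "ccw a b c \<Longrightarrow> a \<noteq> b \<and> b \<noteq> c \<and> a \<noteq> c"
  by (auto simp: ccw_phi)

lemma ccw_rot: "ccw a b c \<Longrightarrow> ccw b c a"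
  by (auto simp: ccw_phi)

lemma tri_rot: "tribone x y z \<Longrightarrow> tribone y z x"
  by (simp add: tribone_def ccw_rot)

lemma tri_distinct: "tribone x y z \<Longrightarrow> x \<noteq> y \<and> y \<noteq> z \<and> x \<noteq> z"
  unfolding tribone_def using ccw_distinct by blast

lemma ccw_total: "a \<noteq> b \<Longrightarrow> b \<noteq> c \<Longrightarrow> a \<noteq> c \<Longrightarrow> ccw a b c \<or> ccw a c b"
  unfolding ccw_phi phi_eq[symmetric] by linarith

lemma ccw_asym: "ccw a b c \<Longrightarrow> \<not> ccw a c b"
  unfolding ccw_phi by linarith

lemma F1:
  assumes t1: "tribone x y z" and t2: "tribone x' y z"
  shows "x = x'"
proof (rule ccontr)
  assume ne: "x \<noteq> x'"
  have c1: "ccw z x y" "ccw z x' y" using t1 t2 by (simp_all add: tribone_def ccw_rot)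
  have a: "farey_adj z x'" "farey_adj x y" "farey_adj z x" "farey_adj x' y"
    using t1 t2 by (simp_all add: tribone_def)
  have "ccw z x x' \<or> ccw z x' x" using ne c1 ccw_distinct ccw_total by metis
  thus False
  proof
    assume h: "ccw z x x'"
    have "ccw x' y z" using c1 ccw_rot by blast
    thus False using F2[OF a(1) a(2) h] by blast
  next
    assume h: "ccw z x' x"
    have "ccw x y z" using c1 ccw_rot by blast
    thus False using F2[OF a(3) a(4) h] by blast
  qed
qed

lemma NB0:
  assumes "farey_adj q r" "ccw q c r" "farey_adj c w" "w \<noteq> c" "\<not> ccw q w r"
  shows "w = q \<or> w = r"
proof (rule ccontr)
  assume "\<not> (w = q \<or> w = r)"
  hence "ccw r w q" using assms(2,4,5) unfolding ccw_phi phi_eq[symmetric] by linarith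
  thus False using F2[OF assms(1,3,2)] by blast
qed

lemma GAP:
  assumes "ccw q c r" "ccw y c z" "\<not>ccw q y r" "\<not>ccw q z r" "\<not>ccw y q z" "\<not>ccw y r z"
  shows "q = y \<and> r = z"
  using assms unfolding ccw_phi phi_eq[symmetric] by smt

definition Inv :: "qp1 set \<Rightarrow> bool" where
  "Inv C \<longleftrightarrow> (\<forall>a y z w. a \<notin> C \<longrightarrow> y \<in> C \<longrightarrow> z \<in> C \<longrightarrow> tribone a z y \<longrightarrow> w \<in> C \<longrightarrow> \<not> ccw y w z)"

lemma InvD: "Inv C \<Longrightarrow> a \<notin> C \<Longrightarrow> y \<in> C \<Longrightarrow> z \<in> C \<Longrightarrow> tribone a z y \<Longrightarrow> w \<in> C \<Longrightarrow> \<not> ccw y w z"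
  unfolding Inv_def by blast

lemma Inv_base:
  assumes t: "tribone x y z" shows "Inv {x, y, z}"
  unfolding Inv_def
proof (intro allI impI)
  fix a y' z' w
  assume a: "a \<notin> {x, y, z}" and y': "y' \<in> {x, y, z}" and z': "z' \<in> {x, y, z}"
    and t': "tribone a z' y'" and w: "w \<in> {x, y, z}"
  have r1: "tribone y z x" "tribone z x y" using t tri_rot by blast+
  have nz: "y' \<noteq> z'" using t' tri_distinct by blast
  have c: "ccw x y z" using t by (simp add: tribone_def)
  have d: "x \<noteq> y" "y \<noteq> z" "x \<noteq> z" using t tri_distinct by blast+
  have "(y' = x \<and> z' = y) \<or> (y' = y \<and> z' = z) \<or> (y' = z \<and> z' = x) \<or>
        (y' = y \<and> z' = x) \<or> (y' = z \<and> z' = y) \<or> (y' = x \<and> z' = z)"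
    using y' z' nz by blast
  moreover have "\<not> (y' = y \<and> z' = x)" using F1[of a x y z] t' a r1 by auto
  moreover have "\<not> (y' = z \<and> z' = y)" using F1[of a y z x] t' a t r1 by auto
  moreover have "\<not> (y' = x \<and> z' = z)" using F1[of a z x y] t' a t r1 by auto
  ultimately show "\<not> ccw y' w z'" using w c d unfolding ccw_phi phi_eq[symmetric] by (elim disjE; auto)
qed

lemma Inv_step:
  assumes I: "Inv C" and pqr: "p \<in> C" "q \<in> C" "r \<in> C" and c: "c \<notin> C"
    and qb: "quadribone p q r c"
  shows "Inv (insert c C)"
  unfolding Inv_def
proof (intro allI impI)
  fix a y z w
  assume a: "a \<notin> insert c C" and y: "y \<in> insert c C" and z: "z \<in> insert c C"
    and t: "tribone a z y" and w: "w \<in> insert c C"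
  have tc: "tribone c r q" and tp: "tribone p q r" using qb by (simp_all add: quadribone_def)
  have gap: "\<And>w. w \<in> C \<Longrightarrow> \<not> ccw q w r" using InvD[OF I c pqr(2,3) tc] by blast
  have cqr: "ccw q c r" using tc by (simp add: tribone_def ccw_rot)
  have aqr: "farey_adj q r" using tc by (simp add: tribone_def adj_sym)
  have nb: "\<And>w. w \<in> C \<Longrightarrow> farey_adj c w \<Longrightarrow> w = q \<or> w = r"
    using NB0[OF aqr cqr] gap c by blast
  have ta: "farey_adj a z" "farey_adj z y" "farey_adj y a" "ccw a z y" using t by (simp_all add: tribone_def)
  have tyz: "y \<noteq> z" using t tri_distinct by blast
  show "\<not> ccw y w z"
  proof (cases "y \<in> C \<and> z \<in> C")
    case True
    have gyz: "\<And>w. w \<in> C \<Longrightarrow> \<not> ccw y w z" using InvD[OF I _ _ _ t] a True by blast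
    show ?thesis
    proof (cases "w = c")
      case False thus ?thesis using w gyz by blast
    next
      case wc: True
      show ?thesis
      proof
        assume h: "ccw y w z"
        have "q = y \<and> r = z" using GAP[OF cqr h[unfolded wc]] gap gyz True pqr by blast
        hence "a = c" using F1[of a z y c] t tc by simp
        thus False using a by simp
      qed
    qed
  next
    case False
    hence "y = c \<or> z = c" using y z by blast
    thus ?thesis
    proof
      assume yc: "y = c"
      hence zC: "z \<in> C" using z tyz by blast
      have "z = q \<or> z = r" using nb[OF zC] ta(2) yc adj_sym by blast
      thus ?thesis
      proof
        assume zq: "z = q"
        have "tribone r q c" using tc tri_rot by blast
        hence "a = r" using F1[of a q c r] t yc zq by simp
        thus ?thesis using a pqr by simp
      next
        assume zr: "z = r"
        show ?thesis
        proof
          assume h: "ccw y w z"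
          hence "w \<noteq> c" using yc ccw_distinct by blast
          hence "w \<in> C" using w by blast
          moreover have "ccw q w r" using h cqr yc zr unfolding ccw_phi by smt
          ultimately show False using gap by blast
        qed
      qed
    next
      assume zc: "z = c"
      hence yC: "y \<in> C" using y tyz by blast
      have "y = q \<or> y = r" using nb[OF yC] ta(2) zc by blast
      thus ?thesis
      proof
        assume yr: "y = r"
        have "tribone q c r" using tc tri_rot by blast
        hence "a = q" using F1[of a c r q] t zc yr by simp
        thus ?thesis using a pqr by simp
      next
        assume yq: "y = q"
        show ?thesis
        proof
          assume h: "ccw y w z"
          hence "w \<noteq> c" using zc ccw_distinct by blast
          hence "w \<in> C" using w by blast
          moreover have "ccw q w r" using h cqr zc yq unfolding ccw_phi by smt
          ultimately show False using gap by blast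
        qed
      qed
    qed
  qed
qed



lemma sets_kext: "sets (kext W nu C m x y z a) = sets (PiM (insert a C) (\<lambda>_. W))"
  unfolding kext_def by (simp add: sets.space_closed sets.sigma_sets_eq)

lemma space_kext: "space (kext W nu C m x y z a) = space (PiM (insert a C) (\<lambda>_. W))"
  unfolding kext_def by (simp add: space_measure_of_conv)

lemma meas_trip: "x \<in> D \<Longrightarrow> y \<in> D \<Longrightarrow> z \<in> D \<Longrightarrow>
   (\<lambda>f. (f x, f y, f z)) \<in> measurable (PiM D (\<lambda>_. W)) (W \<Otimes>\<^sub>M (W \<Otimes>\<^sub>M W))"
  by measurable

lemma nu_meas:
  assumes kernel: "nu \<in> measurable (W \<Otimes>\<^sub>M (W \<Otimes>\<^sub>M W)) (prob_algebra W)"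
    and D: "x \<in> D" "y \<in> D" "z \<in> D"
  shows "(\<lambda>f. nu (f x, f y, f z)) \<in> measurable (PiM D (\<lambda>_. W)) (subprob_algebra W)"
  using measurable_compose[OF meas_trip[OF D] measurable_prob_algebraD[OF kernel]] by simp

lemma upd_meas: "(\<lambda>(f, w). f(b := w)) \<in> measurable (PiM D (\<lambda>_. W) \<Otimes>\<^sub>M W) (PiM (insert b D) (\<lambda>_. W))"
proof -
  have "(\<lambda>p. (fst p)(b := snd p)) \<in> measurable (PiM D (\<lambda>_. W) \<Otimes>\<^sub>M W) (PiM (insert b D) (\<lambda>_. W))"
    by (rule measurable_fun_upd[where J=D]) auto
  thus ?thesis by (simp add: case_prod_beta')
qed

lemma upd_meas1: "f \<in> space (PiM D (\<lambda>_. W)) \<Longrightarrow> (\<lambda>w. f(b := w)) \<in> measurable W (PiM (insert b D) (\<lambda>_. W))"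
  by (rule measurable_fun_upd[where J=D]) auto

definition Kb where
  "Kb W nu D x y z b = (\<lambda>f. distr (nu (f x, f y, f z)) (PiM (insert b D) (\<lambda>_. W)) (\<lambda>w. f(b := w)))"

lemma Kb_meas:
  assumes kernel: "nu \<in> measurable (W \<Otimes>\<^sub>M (W \<Otimes>\<^sub>M W)) (prob_algebra W)"
    and D: "x \<in> D" "y \<in> D" "z \<in> D"
  shows "Kb W nu D x y z b \<in> measurable (PiM D (\<lambda>_. W)) (subprob_algebra (PiM (insert b D) (\<lambda>_. W)))"
  unfolding Kb_def
  by (rule measurable_distr2[OF upd_meas nu_meas[OF kernel D]])

lemma kext_fn:
  assumes kernel: "nu \<in> measurable (W \<Otimes>\<^sub>M (W \<Otimes>\<^sub>M W)) (prob_algebra W)"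
    and D: "x \<in> D" "y \<in> D" "z \<in> D" and sm: "sets m = sets (PiM D (\<lambda>_. W))"
    and S: "S \<in> sets (PiM (insert b D) (\<lambda>_. W))"
  shows "(\<integral>\<^sup>+ f. emeasure (nu (f x, f y, f z)) ((\<lambda>w. f(b := w)) -` S \<inter> space W) \<partial>m)
       = (\<integral>\<^sup>+ f. emeasure (Kb W nu D x y z b f) S \<partial>m)"
proof (rule nn_integral_cong)
  fix f assume f: "f \<in> space m"
  hence f': "f \<in> space (PiM D (\<lambda>_. W))" using sets_eq_imp_space_eq[OF sm] by simp
  have sp: "space (nu (f x, f y, f z)) = space W"
    using subprob_measurableD(1)[OF nu_meas[OF kernel D] f'] .
  have "(\<lambda>w. f(b := w)) \<in> measurable (nu (f x, f y, f z)) (PiM (insert b D) (\<lambda>_. W))"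
    using upd_meas1[OF f'] subprob_measurableD(3)[OF nu_meas[OF kernel D] f', where K="PiM (insert b D) (\<lambda>_. W)"] by simp
  thus "emeasure (nu (f x, f y, f z)) ((\<lambda>w. f(b := w)) -` S \<inter> space W) = emeasure (Kb W nu D x y z b f) S"
    unfolding Kb_def using S sp by (simp add: emeasure_distr)
qed

lemma kext_bind:
  assumes kernel: "nu \<in> measurable (W \<Otimes>\<^sub>M (W \<Otimes>\<^sub>M W)) (prob_algebra W)"
    and D: "x \<in> D" "y \<in> D" "z \<in> D" and sm: "sets m = sets (PiM D (\<lambda>_. W))"
    and ne: "space m \<noteq> {}"
  shows "kext W nu D m x y z b = m \<bind> Kb W nu D x y z b"
proof -
  have K: "Kb W nu D x y z b \<in> measurable m (subprob_algebra (PiM (insert b D) (\<lambda>_. W)))"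
    using Kb_meas[OF kernel D] measurable_cong_sets[OF sm refl] by blast
  have s: "sets (m \<bind> Kb W nu D x y z b) = sets (PiM (insert b D) (\<lambda>_. W))"
    using sets_bind[OF sets_kernel[OF K] ne] .
  have sp: "space (m \<bind> Kb W nu D x y z b) = space (PiM (insert b D) (\<lambda>_. W))"
    using sets_eq_imp_space_eq[OF s] .
  have "m \<bind> Kb W nu D x y z b = measure_of (space (PiM (insert b D) (\<lambda>_. W))) (sets (PiM (insert b D) (\<lambda>_. W))) (emeasure (m \<bind> Kb W nu D x y z b))"
    using measure_of_of_measure[of "m \<bind> Kb W nu D x y z b"] s sp by simp
  also have "\<dots> = kext W nu D m x y z b"
    unfolding kext_def
  proof (rule measure_of_eq[OF sets.space_closed])
    fix S assume "S \<in> sigma_sets (space (PiM (insert b D) (\<lambda>_. W))) (sets (PiM (insert b D) (\<lambda>_. W)))"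
    hence S: "S \<in> sets (PiM (insert b D) (\<lambda>_. W))" by (simp add: sets.sigma_sets_eq)
    show "emeasure (m \<bind> Kb W nu D x y z b) S = (\<integral>\<^sup>+ f. emeasure (nu (f x, f y, f z)) ((\<lambda>w. f(b := w)) -` S \<inter> space W) \<partial>m)"
      using emeasure_bind[OF ne K S] kext_fn[OF kernel D sm S] by simp
  qed
  finally show ?thesis ..
qed

lemma kext_int:
  assumes kernel: "nu \<in> measurable (W \<Otimes>\<^sub>M (W \<Otimes>\<^sub>M W)) (prob_algebra W)"
    and D: "x \<in> D" "y \<in> D" "z \<in> D" and sm: "sets m = sets (PiM D (\<lambda>_. W))"
    and h: "h \<in> borel_measurable (PiM (insert b D) (\<lambda>_. W))"
  shows "(\<integral>\<^sup>+ g. h g \<partial>kext W nu D m x y z b) = (\<integral>\<^sup>+ f. \<integral>\<^sup>+ w. h (f(b := w)) \<partial>nu (f x, f y, f z) \<partial>m)"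
proof (cases "space m = {}")
  case True
  hence "space (PiM D (\<lambda>_. W)) = {}" using sets_eq_imp_space_eq[OF sm] by simp
  hence "space W = {}" using D(1) by (auto simp: space_PiM PiE_eq_empty_iff)
  hence "space (kext W nu D m x y z b) = {}" by (auto simp: space_kext space_PiM PiE_eq_empty_iff)
  thus ?thesis using True by (simp add: nn_integral_empty)
next
  case False
  have K: "Kb W nu D x y z b \<in> measurable m (subprob_algebra (PiM (insert b D) (\<lambda>_. W)))"
    using Kb_meas[OF kernel D] measurable_cong_sets[OF sm refl] by blast
  show ?thesis
    unfolding kext_bind[OF kernel D sm False] nn_integral_bind[OF h K]
  proof (rule nn_integral_cong)
    fix f assume f: "f \<in> space m"
    hence f': "f \<in> space (PiM D (\<lambda>_. W))" using sets_eq_imp_space_eq[OF sm] by simp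
    have "(\<lambda>w. f(b := w)) \<in> measurable (nu (f x, f y, f z)) (PiM (insert b D) (\<lambda>_. W))"
      using upd_meas1[OF f'] subprob_measurableD(3)[OF nu_meas[OF kernel D] f', where K="PiM (insert b D) (\<lambda>_. W)"] by simp
    thus "integral\<^sup>N (Kb W nu D x y z b f) h = (\<integral>\<^sup>+ w. h (f(b := w)) \<partial>nu (f x, f y, f z))"
      unfolding Kb_def using h by (simp add: nn_integral_distr)
  qed
qed

lemma emeasure_pre:
  assumes sN: "sets N = sets W" and T: "T \<in> measurable W P" and S: "S \<in> sets P"
  shows "emeasure N (T -` S \<inter> space W) = (\<integral>\<^sup>+ w. indicator S (T w) \<partial>N)"
proof -
  have sp: "space N = space W" using sets_eq_imp_space_eq[OF sN] .
  have T': "T \<in> measurable N P" using T measurable_cong_sets[OF sN refl] by blast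
  have m: "T -` S \<inter> space W \<in> sets N" using measurable_sets[OF T' S] sp by simp
  have "emeasure N (T -` S \<inter> space W) = (\<integral>\<^sup>+ w. indicator (T -` S \<inter> space W) w \<partial>N)"
    using nn_integral_indicator[OF m] by simp
  also have "\<dots> = (\<integral>\<^sup>+ w. indicator S (T w) \<partial>N)"
    by (rule nn_integral_cong) (simp add: sp indicator_def)
  finally show ?thesis .
qed

lemma ind_upd_meas:
  assumes S: "S \<in> sets (PiM (insert c E) (\<lambda>_. W))"
  shows "(\<lambda>(g, w). indicator S (g(c := w)) :: ennreal) \<in> borel_measurable (PiM E (\<lambda>_. W) \<Otimes>\<^sub>M W)"
proof -
  have "(\<lambda>p. indicator S ((\<lambda>(g, w). g(c := w)) p) :: ennreal) \<in> borel_measurable (PiM E (\<lambda>_. W) \<Otimes>\<^sub>M W)"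
    by (rule measurable_compose[OF upd_meas borel_measurable_indicator[OF S]])
  thus ?thesis by (simp add: case_prod_beta')
qed

lemma H_meas:
  assumes kernel: "nu \<in> measurable (W \<Otimes>\<^sub>M (W \<Otimes>\<^sub>M W)) (prob_algebra W)"
    and E: "p \<in> E" "q \<in> E" "r \<in> E" and S: "S \<in> sets (PiM (insert c E) (\<lambda>_. W))"
  shows "(\<lambda>g. \<integral>\<^sup>+ w. indicator S (g(c := w)) \<partial>nu (g p, g q, g r)) \<in> borel_measurable (PiM E (\<lambda>_. W))"
  using nn_integral_measurable_subprob_algebra2[OF ind_upd_meas[OF S] nu_meas[OF kernel E]] by simp

lemma kext_fn2:
  assumes kernel: "nu \<in> measurable (W \<Otimes>\<^sub>M (W \<Otimes>\<^sub>M W)) (prob_algebra W)"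
    and E: "p \<in> E" "q \<in> E" "r \<in> E" and sm: "sets M = sets (PiM E (\<lambda>_. W))"
    and S: "S \<in> sets (PiM (insert c E) (\<lambda>_. W))"
  shows "(\<integral>\<^sup>+ g. emeasure (nu (g p, g q, g r)) ((\<lambda>w. g(c := w)) -` S \<inter> space W) \<partial>M)
     = (\<integral>\<^sup>+ g. \<integral>\<^sup>+ w. indicator S (g(c := w)) \<partial>nu (g p, g q, g r) \<partial>M)"
proof (rule nn_integral_cong)
  fix g assume "g \<in> space M"
  hence g: "g \<in> space (PiM E (\<lambda>_. W))" using sets_eq_imp_space_eq[OF sm] by simp
  show "emeasure (nu (g p, g q, g r)) ((\<lambda>w. g(c := w)) -` S \<inter> space W) = (\<integral>\<^sup>+ w. indicator S (g(c := w)) \<partial>nu (g p, g q, g r))"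
    by (rule emeasure_pre[OF subprob_measurableD(2)[OF nu_meas[OF kernel E] g] upd_meas1[OF g] S])
qed

lemma prob_nu:
  assumes kernel: "nu \<in> measurable (W \<Otimes>\<^sub>M (W \<Otimes>\<^sub>M W)) (prob_algebra W)"
    and E: "p \<in> E" "q \<in> E" "r \<in> E" and g: "g \<in> space (PiM E (\<lambda>_. W))"
  shows "prob_space (nu (g p, g q, g r))" "sets (nu (g p, g q, g r)) = sets W"
proof -
  have "(g p, g q, g r) \<in> space (W \<Otimes>\<^sub>M (W \<Otimes>\<^sub>M W))"
    using measurable_space[OF meas_trip[OF E] g] .
  hence "nu (g p, g q, g r) \<in> space (prob_algebra W)" using measurable_space[OF kernel] by blast
  thus "prob_space (nu (g p, g q, g r))" "sets (nu (g p, g q, g r)) = sets W"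
    by (simp_all add: space_prob_algebra)
qed

lemma kext_commute:
  assumes kernel: "nu \<in> measurable (W \<Otimes>\<^sub>M (W \<Otimes>\<^sub>M W)) (prob_algebra W)"
    and D1: "x \<in> D" "y \<in> D" "z \<in> D" and D2: "p \<in> D" "q \<in> D" "r \<in> D"
    and b: "b \<notin> D" and c: "c \<notin> D" and bc: "b \<noteq> c"
    and sm: "sets m = sets (PiM D (\<lambda>_. W))"
  shows "kext W nu (insert b D) (kext W nu D m x y z b) p q r c
       = kext W nu (insert c D) (kext W nu D m p q r c) x y z b"
proof -
  define E where "E = insert c (insert b D)"
  have E2: "insert b (insert c D) = E" by (auto simp: E_def)
  define G where "G = (\<lambda>S. \<integral>\<^sup>+ f. \<integral>\<^sup>+ w. \<integral>\<^sup>+ w'. indicator S (f(b := w, c := w')) \<partial>nu (f p, f q, f r) \<partial>nu (f x, f y, f z) \<partial>m)"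
  have L: "kext W nu (insert b D) (kext W nu D m x y z b) p q r c = measure_of (space (PiM E (\<lambda>_. W))) (sets (PiM E (\<lambda>_. W))) G"
    unfolding kext_def[of W nu "insert b D"] E_def[symmetric]
  proof (rule measure_of_eq[OF sets.space_closed])
    fix S assume "S \<in> sigma_sets (space (PiM E (\<lambda>_. W))) (sets (PiM E (\<lambda>_. W)))"
    hence S: "S \<in> sets (PiM (insert c (insert b D)) (\<lambda>_. W))" by (simp add: sets.sigma_sets_eq E_def)
    have D2': "p \<in> insert b D" "q \<in> insert b D" "r \<in> insert b D" using D2 by auto
    have "(\<integral>\<^sup>+ g. emeasure (nu (g p, g q, g r)) ((\<lambda>w. g(c := w)) -` S \<inter> space W) \<partial>kext W nu D m x y z b)
        = (\<integral>\<^sup>+ g. \<integral>\<^sup>+ w. indicator S (g(c := w)) \<partial>nu (g p, g q, g r) \<partial>kext W nu D m x y z b)"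
      by (rule kext_fn2[OF kernel D2' sets_kext S])
    also have "\<dots> = (\<integral>\<^sup>+ f. \<integral>\<^sup>+ w. \<integral>\<^sup>+ w'. indicator S ((f(b := w))(c := w')) \<partial>nu ((f(b := w)) p, (f(b := w)) q, (f(b := w)) r) \<partial>nu (f x, f y, f z) \<partial>m)"
      by (rule kext_int[OF kernel D1 sm H_meas[OF kernel D2' S]])
    also have "\<dots> = G S"
      unfolding G_def using b D2 by (intro nn_integral_cong) auto
    finally show "(\<integral>\<^sup>+ g. emeasure (nu (g p, g q, g r)) ((\<lambda>w. g(c := w)) -` S \<inter> space W) \<partial>kext W nu D m x y z b) = G S" .
  qed
  have R: "kext W nu (insert c D) (kext W nu D m p q r c) x y z b = measure_of (space (PiM E (\<lambda>_. W))) (sets (PiM E (\<lambda>_. W))) G"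
    unfolding kext_def[of W nu "insert c D"] E2
  proof (rule measure_of_eq[OF sets.space_closed])
    fix S assume "S \<in> sigma_sets (space (PiM E (\<lambda>_. W))) (sets (PiM E (\<lambda>_. W)))"
    hence S: "S \<in> sets (PiM (insert b (insert c D)) (\<lambda>_. W))" by (simp add: sets.sigma_sets_eq E2)
    have D1': "x \<in> insert c D" "y \<in> insert c D" "z \<in> insert c D" using D1 by auto
    have "(\<integral>\<^sup>+ g. emeasure (nu (g x, g y, g z)) ((\<lambda>w. g(b := w)) -` S \<inter> space W) \<partial>kext W nu D m p q r c)
        = (\<integral>\<^sup>+ g. \<integral>\<^sup>+ w. indicator S (g(b := w)) \<partial>nu (g x, g y, g z) \<partial>kext W nu D m p q r c)"
      by (rule kext_fn2[OF kernel D1' sets_kext S])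
    also have "\<dots> = (\<integral>\<^sup>+ f. \<integral>\<^sup>+ w'. \<integral>\<^sup>+ w. indicator S ((f(c := w'))(b := w)) \<partial>nu ((f(c := w')) x, (f(c := w')) y, (f(c := w')) z) \<partial>nu (f p, f q, f r) \<partial>m)"
      by (rule kext_int[OF kernel D2 sm H_meas[OF kernel D1' S]])
    also have "\<dots> = G S"
      unfolding G_def
    proof (rule nn_integral_cong)
      fix f assume "f \<in> space m"
      hence f: "f \<in> space (PiM D (\<lambda>_. W))" using sets_eq_imp_space_eq[OF sm] by simp
      have cx: "(f(c := w')) x = f x" "(f(c := w')) y = f y" "(f(c := w')) z = f z" for w'
        using c D1 by auto
      interpret N1: prob_space "nu (f x, f y, f z)" using prob_nu[OF kernel D1 f] by simp
      interpret N2: prob_space "nu (f p, f q, f r)" using prob_nu[OF kernel D2 f] by simp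
      interpret pair_prob_space "nu (f x, f y, f z)" "nu (f p, f q, f r)" ..
      have s1: "sets (nu (f x, f y, f z)) = sets W" "sets (nu (f p, f q, f r)) = sets W"
        using prob_nu[OF kernel D1 f] prob_nu[OF kernel D2 f] by simp_all
      have sS: "S \<in> sets (PiM (insert c (insert b D)) (\<lambda>_. W))" using S by (simp add: insert_commute)
      have m1: "(\<lambda>u. (f(b := fst u))(c := snd u)) \<in> measurable (W \<Otimes>\<^sub>M W) (PiM (insert c (insert b D)) (\<lambda>_. W))"
        by (rule measurable_fun_upd[where J="insert b D"], simp, rule measurable_fun_upd[where J=D])
           (use f in auto)
      have "(\<lambda>u. indicator S ((f(b := fst u))(c := snd u)) :: ennreal) \<in> borel_measurable (W \<Otimes>\<^sub>M W)"
        by (rule measurable_compose[OF m1 borel_measurable_indicator[OF sS]])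
      hence meas: "case_prod (\<lambda>w w'. indicator S ((f(b := w))(c := w')) :: ennreal) \<in> borel_measurable (nu (f x, f y, f z) \<Otimes>\<^sub>M nu (f p, f q, f r))"
        unfolding case_prod_beta' measurable_cong_sets[OF sets_pair_measure_cong[OF s1] refl] by simp
      show "(\<integral>\<^sup>+ w'. \<integral>\<^sup>+ w. indicator S ((f(c := w'))(b := w)) \<partial>nu ((f(c := w')) x, (f(c := w')) y, (f(c := w')) z) \<partial>nu (f p, f q, f r))
          = (\<integral>\<^sup>+ w. \<integral>\<^sup>+ w'. indicator S (f(b := w, c := w')) \<partial>nu (f p, f q, f r) \<partial>nu (f x, f y, f z))"
        unfolding cx using Fubini'[OF meas] bc by (simp add: fun_upd_twist)
    qed
    finally show "(\<integral>\<^sup>+ g. emeasure (nu (g x, g y, g z)) ((\<lambda>w. g(b := w)) -` S \<inter> space W) \<partial>kext W nu D m p q r c) = G S" .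
  qed
  show ?thesis using L R by simp
qed



definition gtri :: "qp1 \<Rightarrow> qp1 \<Rightarrow> qp1 \<Rightarrow> 'w \<times> 'w \<times> 'w \<Rightarrow> qp1 \<Rightarrow> 'w" where
  "gtri x y z = (\<lambda>(p, q, r). (\<lambda>i\<in>{x, y, z}. if i = x then p else if i = y then q else r))"

lemma tri_init_g: "tri_init W mu3 x y z = distr mu3 (PiM {x, y, z} (\<lambda>_. W)) (gtri x y z)"
  by (simp add: tri_init_def gtri_def)

lemma gtri_meas: "gtri x y z \<in> measurable (W \<Otimes>\<^sub>M (W \<Otimes>\<^sub>M W)) (PiM {x, y, z} (\<lambda>_. W))"
proof -
  have "(\<lambda>t. \<lambda>i\<in>{x, y, z}. if i = x then fst t else if i = y then fst (snd t) else snd (snd t))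
     \<in> measurable (W \<Otimes>\<^sub>M (W \<Otimes>\<^sub>M W)) (PiM {x, y, z} (\<lambda>_. W))"
    by (rule measurable_restrict) auto
  thus ?thesis by (simp add: gtri_def case_prod_beta')
qed

lemma tri_rot_eq:
  assumes sets3: "sets mu3 = sets (W \<Otimes>\<^sub>M (W \<Otimes>\<^sub>M W))"
    and cyclic: "distr mu3 (W \<Otimes>\<^sub>M (W \<Otimes>\<^sub>M W)) (\<lambda>(a, b, c). (b, c, a)) = mu3"
    and d: "x \<noteq> y" "y \<noteq> z" "x \<noteq> z"
  shows "tri_init W mu3 x y z = tri_init W mu3 z x y"
proof -
  have rot: "(\<lambda>(a, b, c). (b, c, a)) \<in> measurable mu3 (W \<Otimes>\<^sub>M (W \<Otimes>\<^sub>M W))"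
    unfolding measurable_cong_sets[OF sets3 refl] by measurable
  have "tri_init W mu3 x y z = distr (distr mu3 (W \<Otimes>\<^sub>M (W \<Otimes>\<^sub>M W)) (\<lambda>(a, b, c). (b, c, a))) (PiM {x, y, z} (\<lambda>_. W)) (gtri x y z)"
    by (simp add: tri_init_g cyclic)
  also have "\<dots> = distr mu3 (PiM {x, y, z} (\<lambda>_. W)) (gtri x y z \<circ> (\<lambda>(a, b, c). (b, c, a)))"
    by (rule distr_distr[OF gtri_meas rot])
  also have "\<dots> = distr mu3 (PiM {z, x, y} (\<lambda>_. W)) (gtri z x y)"
    using d by (intro distr_cong) (auto simp: gtri_def insert_commute fun_eq_iff)
  finally show ?thesis by (simp add: tri_init_g)
qed

definition htri :: "qp1 \<Rightarrow> qp1 \<Rightarrow> qp1 \<Rightarrow> qp1 \<Rightarrow> 'w \<times> 'w \<times> 'w \<times> 'w \<Rightarrow> qp1 \<Rightarrow> 'w" where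
  "htri x y z a = (\<lambda>(p, q, r, d). (gtri x y z (p, q, r))(a := d))"

lemma htri_meas: "htri x y z a \<in> measurable (W \<Otimes>\<^sub>M (W \<Otimes>\<^sub>M (W \<Otimes>\<^sub>M W))) (PiM (insert a {x, y, z}) (\<lambda>_. W))"
proof -
  have g: "(\<lambda>u. gtri x y z (fst u, fst (snd u), fst (snd (snd u)))) \<in> measurable (W \<Otimes>\<^sub>M (W \<Otimes>\<^sub>M (W \<Otimes>\<^sub>M W))) (PiM {x, y, z} (\<lambda>_. W))"
    by (rule measurable_compose[OF _ gtri_meas]) simp
  have "(\<lambda>u. (gtri x y z (fst u, fst (snd u), fst (snd (snd u))))(a := snd (snd (snd u)))) \<in> measurable (W \<Otimes>\<^sub>M (W \<Otimes>\<^sub>M (W \<Otimes>\<^sub>M W))) (PiM (insert a {x, y, z}) (\<lambda>_. W))"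
    by (rule measurable_fun_upd[OF _ g]) auto
  thus ?thesis by (simp add: htri_def case_prod_beta')
qed

lemma KTRI:
  assumes kernel: "nu \<in> measurable (W \<Otimes>\<^sub>M (W \<Otimes>\<^sub>M W)) (prob_algebra W)"
    and sets3: "sets mu3 = sets (W \<Otimes>\<^sub>M (W \<Otimes>\<^sub>M W))"
    and sets4: "sets mu4 = sets (W \<Otimes>\<^sub>M (W \<Otimes>\<^sub>M (W \<Otimes>\<^sub>M W)))"
    and disint: "\<forall>S \<in> sets (W \<Otimes>\<^sub>M (W \<Otimes>\<^sub>M (W \<Otimes>\<^sub>M W))).
       emeasure mu4 S = (\<integral>\<^sup>+ t. emeasure (nu t)
          {d \<in> space W. (fst t, fst (snd t), snd (snd t), d) \<in> S} \<partial>mu3)"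
    and d: "x \<noteq> y" "y \<noteq> z" "x \<noteq> z"
  shows "kext W nu {x, y, z} (tri_init W mu3 x y z) x y z a = distr mu4 (PiM (insert a {x, y, z}) (\<lambda>_. W)) (htri x y z a)"
  unfolding kext_def distr_def
proof (rule measure_of_eq[OF sets.space_closed])
  let ?P = "PiM (insert a {x, y, z}) (\<lambda>_. W)"
  let ?W3 = "W \<Otimes>\<^sub>M (W \<Otimes>\<^sub>M W)"
  let ?W4 = "W \<Otimes>\<^sub>M (W \<Otimes>\<^sub>M (W \<Otimes>\<^sub>M W))"
  fix S assume "S \<in> sigma_sets (space ?P) (sets ?P)"
  hence S: "S \<in> sets ?P" by (simp add: sets.sigma_sets_eq)
  have D: "x \<in> {x, y, z}" "y \<in> {x, y, z}" "z \<in> {x, y, z}" by auto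
  have sm: "sets (tri_init W mu3 x y z) = sets (PiM {x, y, z} (\<lambda>_. W))" by (simp add: tri_init_g)
  have g3: "gtri x y z \<in> measurable mu3 (PiM {x, y, z} (\<lambda>_. W))"
    using gtri_meas measurable_cong_sets[OF sets3 refl] by blast
  have S4: "htri x y z a -` S \<inter> space ?W4 \<in> sets ?W4" using measurable_sets[OF htri_meas S] .
  have "(\<integral>\<^sup>+ f. emeasure (nu (f x, f y, f z)) ((\<lambda>w. f(a := w)) -` S \<inter> space W) \<partial>tri_init W mu3 x y z)
     = (\<integral>\<^sup>+ f. emeasure (Kb W nu {x, y, z} x y z a f) S \<partial>tri_init W mu3 x y z)"
    by (rule kext_fn[OF kernel D sm S])
  also have "\<dots> = (\<integral>\<^sup>+ t. emeasure (Kb W nu {x, y, z} x y z a (gtri x y z t)) S \<partial>mu3)"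
    unfolding tri_init_g
    by (rule nn_integral_distr[OF g3]) (simp add: measurable_emeasure_kernel[OF Kb_meas[OF kernel D] S])
  also have "\<dots> = (\<integral>\<^sup>+ t. emeasure (nu t) {d \<in> space W. (fst t, fst (snd t), snd (snd t), d) \<in> htri x y z a -` S \<inter> space ?W4} \<partial>mu3)"
  proof (rule nn_integral_cong)
    fix t assume "t \<in> space mu3"
    hence t: "t \<in> space ?W3" using sets_eq_imp_space_eq[OF sets3] by simp
    obtain p q r where tp: "t = (p, q, r)" by (cases t) auto
    have pqr: "p \<in> space W" "q \<in> space W" "r \<in> space W" using t tp by (auto simp: space_pair_measure)
    have gt: "gtri x y z t x = p" "gtri x y z t y = q" "gtri x y z t z = r" using d tp by (auto simp: gtri_def)
    have nt: "nu t \<in> space (prob_algebra W)" using measurable_space[OF kernel t] .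
    hence snt: "sets (nu t) = sets W" by (simp add: space_prob_algebra)
    have gsp: "gtri x y z t \<in> space (PiM {x, y, z} (\<lambda>_. W))" using measurable_space[OF gtri_meas t] .
    have "emeasure (Kb W nu {x, y, z} x y z a (gtri x y z t)) S = emeasure (nu t) ((\<lambda>w. (gtri x y z t)(a := w)) -` S \<inter> space W)"
      unfolding Kb_def gt tp[symmetric]
      using upd_meas1[OF gsp] measurable_cong_sets[OF snt refl] S sets_eq_imp_space_eq[OF snt]
      by (subst emeasure_distr) auto
    also have "(\<lambda>w. (gtri x y z t)(a := w)) -` S \<inter> space W = {d \<in> space W. (fst t, fst (snd t), snd (snd t), d) \<in> htri x y z a -` S \<inter> space ?W4}"
      using pqr tp by (auto simp: htri_def space_pair_measure)
    finally show "emeasure (Kb W nu {x, y, z} x y z a (gtri x y z t)) S = emeasure (nu t) {d \<in> space W. (fst t, fst (snd t), snd (snd t), d) \<in> htri x y z a -` S \<inter> space ?W4}" .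
  qed
  also have "\<dots> = emeasure mu4 (htri x y z a -` S \<inter> space ?W4)"
    using disint S4 by simp
  also have "\<dots> = emeasure mu4 (htri x y z a -` S \<inter> space mu4)"
    using sets_eq_imp_space_eq[OF sets4] by simp
  finally show "(\<integral>\<^sup>+ f. emeasure (nu (f x, f y, f z)) ((\<lambda>w. f(a := w)) -` S \<inter> space W) \<partial>tri_init W mu3 x y z) = emeasure mu4 (htri x y z a -` S \<inter> space mu4)" .
qed

lemma K4:
  assumes kernel: "nu \<in> measurable (W \<Otimes>\<^sub>M (W \<Otimes>\<^sub>M W)) (prob_algebra W)"
    and sets3: "sets mu3 = sets (W \<Otimes>\<^sub>M (W \<Otimes>\<^sub>M W))"
    and sets4: "sets mu4 = sets (W \<Otimes>\<^sub>M (W \<Otimes>\<^sub>M (W \<Otimes>\<^sub>M W)))"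
    and reverse: "distr mu4 (W \<Otimes>\<^sub>M (W \<Otimes>\<^sub>M (W \<Otimes>\<^sub>M W))) (\<lambda>(a, b, c, d). (d, c, b, a)) = mu4"
    and disint: "\<forall>S \<in> sets (W \<Otimes>\<^sub>M (W \<Otimes>\<^sub>M (W \<Otimes>\<^sub>M W))).
       emeasure mu4 S = (\<integral>\<^sup>+ t. emeasure (nu t)
          {d \<in> space W. (fst t, fst (snd t), snd (snd t), d) \<in> S} \<partial>mu3)"
    and d: "x \<noteq> y" "y \<noteq> z" "x \<noteq> z" "a \<noteq> x" "a \<noteq> y" "a \<noteq> z"
  shows "kext W nu {x, y, z} (tri_init W mu3 x y z) x y z a = kext W nu {a, z, y} (tri_init W mu3 a z y) a z y x"
proof -
  let ?W4 = "W \<Otimes>\<^sub>M (W \<Otimes>\<^sub>M (W \<Otimes>\<^sub>M W))"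
  have rv: "(\<lambda>(a, b, c, d). (d, c, b, a)) \<in> measurable mu4 ?W4"
    unfolding measurable_cong_sets[OF sets4 refl] by measurable
  have e: "insert x {a, z, y} = insert a {x, y, z}" by auto
  have "kext W nu {a, z, y} (tri_init W mu3 a z y) a z y x = distr mu4 (PiM (insert x {a, z, y}) (\<lambda>_. W)) (htri a z y x)"
    using d by (intro KTRI[OF kernel sets3 sets4 disint]) auto
  also have "\<dots> = distr (distr mu4 ?W4 (\<lambda>(a, b, c, d). (d, c, b, a))) (PiM (insert x {a, z, y}) (\<lambda>_. W)) (htri a z y x)"
    by (simp add: reverse)
  also have "\<dots> = distr mu4 (PiM (insert x {a, z, y}) (\<lambda>_. W)) (htri a z y x \<circ> (\<lambda>(a, b, c, d). (d, c, b, a)))"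
    by (rule distr_distr[OF htri_meas rv])
  also have "\<dots> = distr mu4 (PiM (insert a {x, y, z}) (\<lambda>_. W)) (htri x y z a)"
    unfolding e using d by (intro distr_cong) (auto simp: htri_def gtri_def fun_eq_iff)
  also have "\<dots> = kext W nu {x, y, z} (tri_init W mu3 x y z) x y z a"
    using d by (intro KTRI[OF kernel sets3 sets4 disint, symmetric]) auto
  finally show ?thesis ..
qed



lemma build_inv:
  assumes "mu_build W mu3 nu u C m"
  shows "finite C \<and> 3 \<le> card C \<and> Inv C \<and> sets m = sets (PiM C (\<lambda>_. W))"
  using assms
proof (induction rule: mu_build.induct)
  case (base x y z)
  thus ?case using tri_distinct[OF base(1)] Inv_base[OF base(1)] by (simp add: tri_init_g)
next
  case (step C m x y z a)
  thus ?case using Inv_step[of C x y z a] by (simp add: sets_kext)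
qed

lemma build3:
  assumes "mu_build W mu3 nu u C m"
  shows "card C = 3 \<Longrightarrow> \<exists>x y z. tribone x y z \<and> C = {x, y, z} \<and> m = tri_init W mu3 x y z"
  using assms
proof (induction rule: mu_build.induct)
  case (base x y z) thus ?case by blast
next
  case (step C m x y z a)
  thus ?case using build_inv[OF step(1)] by simp
qed

lemma tri_same_set:
  assumes t: "tribone x y z" "tribone x2 y2 z2" and e: "{x2, y2, z2} = {x, y, z}"
  shows "(x2 = x \<and> y2 = y \<and> z2 = z) \<or> (x2 = y \<and> y2 = z \<and> z2 = x) \<or> (x2 = z \<and> y2 = x \<and> z2 = y)"
proof -
  have c: "ccw x y z" "ccw x2 y2 z2" using t by (simp_all add: tribone_def)
  have d: "x \<noteq> y" "y \<noteq> z" "x \<noteq> z" "x2 \<noteq> y2" "y2 \<noteq> z2" "x2 \<noteq> z2" using t tri_distinct by blast+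
  have m: "x2 \<in> {x, y, z}" "y2 \<in> {x, y, z}" "z2 \<in> {x, y, z}" using e by blast+
  have odd: "\<not> ccw x z y" "\<not> ccw y x z" "\<not> ccw z y x"
    using c(1) unfolding ccw_phi by linarith+
  show ?thesis using m d c(2) odd by auto
qed

lemma tri_init_same:
  assumes sets3: "sets mu3 = sets (W \<Otimes>\<^sub>M (W \<Otimes>\<^sub>M W))"
    and cyclic: "distr mu3 (W \<Otimes>\<^sub>M (W \<Otimes>\<^sub>M W)) (\<lambda>(a, b, c). (b, c, a)) = mu3"
    and t: "tribone x y z" "tribone x2 y2 z2" and e: "{x2, y2, z2} = {x, y, z}"
  shows "tri_init W mu3 x2 y2 z2 = tri_init W mu3 x y z"
proof -
  have d: "x \<noteq> y" "y \<noteq> z" "x \<noteq> z" using t tri_distinct by blast+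
  have r1: "tri_init W mu3 x y z = tri_init W mu3 z x y" by (rule tri_rot_eq[OF sets3 cyclic d])
  have r2: "tri_init W mu3 y z x = tri_init W mu3 x y z" using tri_rot_eq[OF sets3 cyclic, of y z x] d by auto
  show ?thesis using tri_same_set[OF t e] r1 r2 by auto
qed

lemma Qlem:
  assumes kernel: "nu \<in> measurable (W \<Otimes>\<^sub>M (W \<Otimes>\<^sub>M W)) (prob_algebra W)"
    and sets3: "sets mu3 = sets (W \<Otimes>\<^sub>M (W \<Otimes>\<^sub>M W))"
    and sets4: "sets mu4 = sets (W \<Otimes>\<^sub>M (W \<Otimes>\<^sub>M (W \<Otimes>\<^sub>M W)))"
    and cyclic: "distr mu3 (W \<Otimes>\<^sub>M (W \<Otimes>\<^sub>M W)) (\<lambda>(a, b, c). (b, c, a)) = mu3"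
    and reverse: "distr mu4 (W \<Otimes>\<^sub>M (W \<Otimes>\<^sub>M (W \<Otimes>\<^sub>M W))) (\<lambda>(a, b, c, d). (d, c, b, a)) = mu4"
    and disint: "\<forall>S \<in> sets (W \<Otimes>\<^sub>M (W \<Otimes>\<^sub>M (W \<Otimes>\<^sub>M W))).
       emeasure mu4 S = (\<integral>\<^sup>+ t. emeasure (nu t)
          {d \<in> space W. (fst t, fst (snd t), snd (snd t), d) \<in> S} \<partial>mu3)"
    and B: "mu_build W mu3 nu u C m"
  shows "b \<in> C \<Longrightarrow> x' \<in> C \<Longrightarrow> y' \<in> C \<Longrightarrow> z' \<in> C \<Longrightarrow> b \<noteq> x' \<Longrightarrow> b \<noteq> y' \<Longrightarrow> b \<noteq> z' \<Longrightarrow>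
    quadribone x' y' z' b \<Longrightarrow> (\<forall>w\<in>C. ccw y' w z' \<longrightarrow> w = b) \<Longrightarrow> 4 \<le> card C \<Longrightarrow>
    \<exists>u' m'. mu_build W mu3 nu u' (C - {b}) m' \<and> m = kext W nu (C - {b}) m' x' y' z' b"
  using B
proof (induction arbitrary: b x' y' z' rule: mu_build.induct)
  case (base x y z)
  have "card {x, y, z} \<le> 3" by (simp add: card_insert_le_m1)
  thus ?case using base by simp
next
  case (step C0 m0 p q r c b x' y' z')
  let ?C = "insert c C0"
  note BI = build_inv[OF step.hyps(1)]
  have tc: "tribone c r q" and tp: "tribone p q r" using step.hyps(6) by (simp_all add: quadribone_def)
  have tb: "tribone b z' y'" and tt: "tribone x' y' z'" using step.prems(8) by (simp_all add: quadribone_def)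
  have cqr: "ccw q c r" using tc by (simp add: tribone_def ccw_rot)
  have cby: "ccw y' b z'" using tb by (simp add: tribone_def ccw_rot)
  have gap: "\<And>w. w \<in> C0 \<Longrightarrow> \<not> ccw q w r" using InvD[OF _ step.hyps(5) step.hyps(3,4) tc] BI by blast
  have aqr: "farey_adj q r" using tc by (simp add: tribone_def adj_sym)
  have nb: "\<And>w. w \<in> C0 \<Longrightarrow> farey_adj c w \<Longrightarrow> w = q \<or> w = r"
    using NB0[OF aqr cqr] gap step.hyps(5) by blast
  have ay: "farey_adj y' z'" using tt by (simp add: tribone_def)
  have H: "\<And>w. w \<in> ?C \<Longrightarrow> ccw y' w z' \<Longrightarrow> w = b" using step.prems(9) by blast
  have nbb: "\<And>w. w \<in> ?C \<Longrightarrow> farey_adj b w \<Longrightarrow> w \<noteq> b \<Longrightarrow> w = y' \<or> w = z'"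
    using NB0[OF ay cby] H by blast
  have dt: "x' \<noteq> y'" "y' \<noteq> z'" "x' \<noteq> z'" using tt tri_distinct by blast+
  have dp: "p \<noteq> q" "q \<noteq> r" "p \<noteq> r" using tp tri_distinct by blast+
  have cC0: "c \<notin> C0" "p \<in> C0" "q \<in> C0" "r \<in> C0" using step.hyps by auto
  show ?case
  proof (cases "c = b")
    case True
    have Cb: "?C - {b} = C0" using True cC0 by auto
    have "\<not> ccw y' q z'" using H[of q] cC0 True by auto
    moreover have "\<not> ccw y' r z'" using H[of r] cC0 True by auto
    moreover have yz: "y' \<in> C0" "z' \<in> C0" using step.prems(3,4,6,7) True by auto
    ultimately have "q = y' \<and> r = z'" using GAP[OF cqr cby[folded True] gap[OF yz(1)] gap[OF yz(2)]] by blast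
    moreover hence "p = x'" using F1[OF tp] tt by simp
    ultimately show ?thesis using Cb True step.hyps(1) by auto
  next
    case cb: False
    have bC0: "b \<in> C0" using step.prems(1) cb by auto
    show ?thesis
    proof (cases "c = x' \<or> c = y' \<or> c = z'")
      case True
      have conf: "c = x' \<and> y' = r \<and> z' = q \<and> b = p"
      proof -
        { assume cx: "c = x'"
          have yz: "y' \<in> C0" "z' \<in> C0" using step.prems(3,4) cx dt by auto
          have "farey_adj c y'" "farey_adj c z'" using tt cx by (simp_all add: tribone_def adj_sym)
          hence "y' = q \<or> y' = r" "z' = q \<or> z' = r" using nb yz by blast+
          moreover have "\<not> (y' = q \<and> z' = r)"
          proof
            assume "y' = q \<and> z' = r"
            hence "ccw c q r" using tt cx by (simp add: tribone_def)
            thus False using tc ccw_asym by (simp add: tribone_def)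
          qed
          ultimately have "y' = r \<and> z' = q" using dt by blast
          moreover hence "b = p" using F1[of b q r p] tb tp by simp
          ultimately have ?thesis using cx by simp }
        moreover
        { assume cy: "c = y'"
          have xz: "x' \<in> C0" "z' \<in> C0" using step.prems(2,4) cy dt by auto
          have "farey_adj c x'" "farey_adj c z'" using tt cy by (simp_all add: tribone_def adj_sym)
          hence "x' = q \<or> x' = r" "z' = q \<or> z' = r" using nb xz by blast+
          moreover have "farey_adj c b" using tb cy by (simp add: tribone_def)
          hence "b = q \<or> b = r" using nb bC0 by blast
          ultimately have False using dt step.prems(5,7) by blast }
        moreover
        { assume cz: "c = z'"
          have xy: "x' \<in> C0" "y' \<in> C0" using step.prems(2,3) cz dt by auto
          have "farey_adj c x'" "farey_adj c y'" using tt cz by (simp_all add: tribone_def adj_sym)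
          hence "x' = q \<or> x' = r" "y' = q \<or> y' = r" using nb xy by blast+
          moreover have "farey_adj c b" using tb cz by (simp add: tribone_def adj_sym)
          hence "b = q \<or> b = r" using nb bC0 by blast
          ultimately have False using dt step.prems(5,6) by blast }
        ultimately show ?thesis using True by blast
      qed
      have C0eq: "C0 = {p, q, r}"
      proof
        show "{p, q, r} \<subseteq> C0" using cC0 by auto
        show "C0 \<subseteq> {p, q, r}"
        proof
          fix w assume w: "w \<in> C0"
          show "w \<in> {p, q, r}"
          proof (rule ccontr)
            assume "w \<notin> {p, q, r}"
            hence "w \<noteq> q" "w \<noteq> r" "w \<noteq> p" by auto
            hence "ccw r w q" using gap[OF w] dp ccw_total ccw_rot by metis
            hence "w = b" using H[of w] w conf by auto
            thus False using conf \<open>w \<noteq> p\<close> by simp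
          qed
        qed
      qed
      have "card C0 = 3" using C0eq dp by simp
      then obtain x0 y0 z0 where x0: "tribone x0 y0 z0" "C0 = {x0, y0, z0}" "m0 = tri_init W mu3 x0 y0 z0"
        using build3[OF step.hyps(1)] by blast
      have m0: "m0 = tri_init W mu3 p q r" using tri_init_same[OF sets3 cyclic tp x0(1)] x0 C0eq by simp
      have Cb: "?C - {b} = {c, r, q}" using conf C0eq dp cC0 by auto
      have dc: "c \<noteq> p" "c \<noteq> q" "c \<noteq> r" using cC0 by auto
      have "kext W nu C0 m0 p q r c = kext W nu {c, r, q} (tri_init W mu3 c r q) c r q p"
        unfolding m0 C0eq using dp dc by (intro K4[OF kernel sets3 sets4 reverse disint]) auto
      moreover have "mu_build W mu3 nu {c, r, q} {c, r, q} (tri_init W mu3 c r q)"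
        by (rule mu_build.base[OF tc refl])
      ultimately show ?thesis using Cb conf by metis
    next
      case False
      have nbp: "b \<noteq> p \<and> b \<noteq> q \<and> b \<noteq> r"
      proof -
        { assume "b = q"
          hence "farey_adj b c" using tc by (simp add: tribone_def)
          hence False using nbb[of c] cb False by auto }
        moreover
        { assume "b = r"
          hence "farey_adj b c" using tc by (simp add: tribone_def adj_sym)
          hence False using nbb[of c] cb False by auto }
        moreover
        { assume bp: "b = p"
          have "farey_adj b q" "farey_adj b r" using tp bp by (simp_all add: tribone_def adj_sym)
          hence "q = y' \<or> q = z'" "r = y' \<or> r = z'" using nbb cC0 dp bp by auto
          moreover have "\<not> (q = y' \<and> r = z')"
          proof
            assume "q = y' \<and> r = z'"
            hence "ccw b y' z'" using tp bp by (simp add: tribone_def)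
            thus False using tb ccw_asym by (simp add: tribone_def)
          qed
          ultimately have "q = z' \<and> r = y'" using dp by blast
          hence "c = x'" using F1[OF tc] tt by simp
          hence False using False by simp }
        ultimately show ?thesis by blast
      qed
      define D where "D = C0 - {b}"
      have xyz0: "x' \<in> C0" "y' \<in> C0" "z' \<in> C0" using step.prems(2,3,4) False by auto
      have "{b, x', y', z'} \<subseteq> C0" using xyz0 bC0 by auto
      moreover have "card {b, x', y', z'} = 4" using dt step.prems(5,6,7) by simp
      ultimately have c4: "4 \<le> card C0" using BI card_mono by metis
      obtain u'' m0' where IH: "mu_build W mu3 nu u'' D m0'" "m0 = kext W nu D m0' x' y' z' b"
        using step.IH[OF bC0 xyz0 step.prems(5,6,7,8) _ c4] H unfolding D_def by auto
      have D1: "x' \<in> D" "y' \<in> D" "z' \<in> D" using xyz0 step.prems(5,6,7) by (auto simp: D_def)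
      have D2: "p \<in> D" "q \<in> D" "r \<in> D" using cC0 nbp by (auto simp: D_def)
      have bD: "b \<notin> D" "c \<notin> D" using cC0 by (auto simp: D_def)
      have C0D: "C0 = insert b D" using bC0 by (auto simp: D_def)
      have CD: "?C - {b} = insert c D" using cb by (auto simp: D_def)
      have sm: "sets m0' = sets (PiM D (\<lambda>_. W))" using build_inv[OF IH(1)] by simp
      have "kext W nu C0 m0 p q r c = kext W nu (insert c D) (kext W nu D m0' p q r c) x' y' z' b"
        unfolding C0D IH(2) by (rule kext_commute[OF kernel D1 D2 bD cb[symmetric] sm])
      moreover have "mu_build W mu3 nu u'' (insert c D) (kext W nu D m0' p q r c)"
        by (rule mu_build.step[OF IH(1) D2 bD(2) step.hyps(6)])
      ultimately show ?thesis using CD by metis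
    qed
  qed
qed

lemma UNIQ:
  assumes kernel: "nu \<in> measurable (W \<Otimes>\<^sub>M (W \<Otimes>\<^sub>M W)) (prob_algebra W)"
    and sets3: "sets mu3 = sets (W \<Otimes>\<^sub>M (W \<Otimes>\<^sub>M W))"
    and sets4: "sets mu4 = sets (W \<Otimes>\<^sub>M (W \<Otimes>\<^sub>M (W \<Otimes>\<^sub>M W)))"
    and cyclic: "distr mu3 (W \<Otimes>\<^sub>M (W \<Otimes>\<^sub>M W)) (\<lambda>(a, b, c). (b, c, a)) = mu3"
    and reverse: "distr mu4 (W \<Otimes>\<^sub>M (W \<Otimes>\<^sub>M (W \<Otimes>\<^sub>M W))) (\<lambda>(a, b, c, d). (d, c, b, a)) = mu4"
    and disint: "\<forall>S \<in> sets (W \<Otimes>\<^sub>M (W \<Otimes>\<^sub>M (W \<Otimes>\<^sub>M W))).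
       emeasure mu4 S = (\<integral>\<^sup>+ t. emeasure (nu t)
          {d \<in> space W. (fst t, fst (snd t), snd (snd t), d) \<in> S} \<partial>mu3)"
    and B1: "mu_build W mu3 nu u1 C m1"
  shows "mu_build W mu3 nu u2 C m2 \<Longrightarrow> m1 = m2"
  using B1
proof (induction arbitrary: u2 m2 rule: mu_build.induct)
  case (base x y z)
  have "card {x, y, z} = 3" using tri_distinct[OF base(1)] by simp
  then obtain x2 y2 z2 where "tribone x2 y2 z2" "{x, y, z} = {x2, y2, z2}" "m2 = tri_init W mu3 x2 y2 z2"
    using build3[OF base(3)] by blast
  thus ?case using tri_init_same[OF sets3 cyclic base(1)] by metis
next
  case (step C1 m1' x y z a u2 m2)
  note BI = build_inv[OF step.hyps(1)]
  have tz: "tribone a z y" using step.hyps(6) by (simp add: quadribone_def)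
  have dxyz: "a \<noteq> x" "a \<noteq> y" "a \<noteq> z" using step.hyps(2-5) by auto
  have H: "\<forall>w\<in>insert a C1. ccw y w z \<longrightarrow> w = a"
    using InvD[OF _ step.hyps(5) step.hyps(3,4) tz] BI by blast
  have c4: "4 \<le> card (insert a C1)" using BI step.hyps(5) by simp
  obtain u' m'' where Q: "mu_build W mu3 nu u' (insert a C1 - {a}) m''"
    "m2 = kext W nu (insert a C1 - {a}) m'' x y z a"
    using Qlem[OF kernel sets3 sets4 cyclic reverse disint step.prems, of a x y z] step.hyps(2-6) dxyz H c4
    by auto
  have e: "insert a C1 - {a} = C1" using step.hyps(5) by auto
  show ?case using Q step.IH[of u' m''] e by simp
qed


theorem mainTheorem4:
  fixes W :: "'w measure"
    and mu3 :: "('w \<times> 'w \<times> 'w) measure"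
    and mu4 :: "('w \<times> 'w \<times> 'w \<times> 'w) measure"
    and nu :: "'w \<times> 'w \<times> 'w \<Rightarrow> 'w measure"
    and A v w :: "qp1 set"
  assumes sets3: "sets mu3 = sets (W \<Otimes>\<^sub>M (W \<Otimes>\<^sub>M W))"
    and sets4: "sets mu4 = sets (W \<Otimes>\<^sub>M (W \<Otimes>\<^sub>M (W \<Otimes>\<^sub>M W)))"
    and cyclic: "distr mu3 (W \<Otimes>\<^sub>M (W \<Otimes>\<^sub>M W)) (\<lambda>(a, b, c). (b, c, a)) = mu3"
    and reverse: "distr mu4 (W \<Otimes>\<^sub>M (W \<Otimes>\<^sub>M (W \<Otimes>\<^sub>M W))) (\<lambda>(a, b, c, d). (d, c, b, a)) = mu4"
    and proj: "distr mu4 (W \<Otimes>\<^sub>M (W \<Otimes>\<^sub>M W)) (\<lambda>(a, b, c, d). (a, b, c)) = mu3"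
    and kernel: "nu \<in> measurable (W \<Otimes>\<^sub>M (W \<Otimes>\<^sub>M W)) (prob_algebra W)"
    and disint: "\<forall>S \<in> sets (W \<Otimes>\<^sub>M (W \<Otimes>\<^sub>M (W \<Otimes>\<^sub>M W))).
       emeasure mu4 S = (\<integral>\<^sup>+ t. emeasure (nu t)
          {d \<in> space W. (fst t, fst (snd t), snd (snd t), d) \<in> S} \<partial>mu3)"
    and fin: "finite A"
    and conn_v: "vconnected A v"
    and conn_w: "vconnected A w"
  shows "\<forall>m1 m2. mu_build W mu3 nu v A m1 \<and> mu_build W mu3 nu w A m2 \<longrightarrow> m1 = m2"
  using UNIQ[OF kernel sets3 sets4 cyclic reverse disint] by blast

end
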